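(* Let $R\subseteq\mathbb N$ be sparse and let $A,B$ be operators on $R$ with $A\neq_R 0$. Then there is $\Delta_0\in\mathbb N$ such that for all $\Delta\ge\Delta_0$ and all $z\in R$, $|A(\sigma^\Delta z)|>B z$.
   Context: Let $R\subseteq\mathbb N$ be infinite, enumerated increasingly as $(r_n)_{n\in\mathbb N}$; $\sigma:R\to R$ is the successor map $\sigma(r_n)=r_{n+1}$ and $\sigma^k$ its $k$-fold iterate ($\sigma^0=\mathrm{id}$). An operator on $R$ is a function $R\to\mathbb Z$, $z\mapsto a_m\sigma^m(z)+\dots+a_0\sigma^0(z)$ with $a_i\in\mathbb Z$. For an operator $A$: $A=_R0$ if $Az=0$ for all $z\in R$; $A>_R0$ (resp. $A<_R0$) if $Az>0$ (resp. $Az<0$) for all but finitely many $z\in R$; $A\ne_R0$ means not $A=_R0$. $R$ is sparse if every operator $A$ satisfies (S1) $A=_R0$ or $A>_R0$ or $A<_R0$; and (S2) if $A>_R0$ then there is $\Delta\in\mathbb N$ with $A(\sigma^\Delta z)>z$ for all $z\in R$. *)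

theory Defs
  imports Main "HOL-Library.Infinite_Set"
begin

text \<open>Enumeration r_n = enumerate R n of an infinite R, successor map sigma(r_n) = r_(n+1).\<close>
definition sigma :: "nat set \<Rightarrow> nat \<Rightarrow> nat" where
  "sigma R z = enumerate R (Suc (inv_into UNIV (enumerate R) z))"

text \<open>An operator a_m sigma^m + ... + a_0 sigma^0 is given by its coefficient list [a_0, ..., a_m].\<close>
definition op_apply :: "nat set \<Rightarrow> int list \<Rightarrow> nat \<Rightarrow> int" where
  "op_apply R A z = (\<Sum>i<length A. A ! i * int ((sigma R ^^ i) z))"

definition op_zero :: "nat set \<Rightarrow> int list \<Rightarrow> bool" where
  "op_zero R A \<longleftrightarrow> (\<forall>z\<in>R. op_apply R A z = 0)"

definition op_pos :: "nat set \<Rightarrow> int list \<Rightarrow> bool" where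
  "op_pos R A \<longleftrightarrow> finite {z\<in>R. \<not> op_apply R A z > 0}"

definition op_neg :: "nat set \<Rightarrow> int list \<Rightarrow> bool" where
  "op_neg R A \<longleftrightarrow> finite {z\<in>R. \<not> op_apply R A z < 0}"

definition sparse :: "nat set \<Rightarrow> bool" where
  "sparse R \<longleftrightarrow>
     (\<forall>A. op_zero R A \<or> op_pos R A \<or> op_neg R A) \<and>
     (\<forall>A. op_pos R A \<longrightarrow> (\<exists>\<Delta>::nat. \<forall>z\<in>R. op_apply R A ((sigma R ^^ \<Delta>) z) > int z))"

end

theory Submission
  imports Defs
begin

lemma sig_props:
  assumes "infinite R" "z \<in> R"
  shows "sigma R z \<in> R \<and> z < sigma R z"
proof -
  have "z \<in> range (enumerate R)" using assms range_enumerate by blast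
  then have e: "enumerate R (inv_into UNIV (enumerate R) z) = z" by (rule f_inv_into_f)
  have "sigma R z \<in> R" unfolding sigma_def using assms(1) enumerate_in_set by blast
  moreover have "z < sigma R z" unfolding sigma_def
    using enumerate_mono[OF lessI assms(1), of "inv_into UNIV (enumerate R) z"] e by simp
  ultimately show ?thesis by blast
qed

lemma pow_in:
  assumes "infinite R" "z \<in> R"
  shows "(sigma R ^^ n) z \<in> R \<and> z \<le> (sigma R ^^ n) z"
proof (induction n)
  case 0 then show ?case using assms by simp
next
  case (Suc n)
  then show ?case using sig_props[OF assms(1), of "(sigma R ^^ n) z"] by auto
qed

lemma pow_mono:
  assumes "infinite R" "z \<in> R" "i \<le> j"
  shows "(sigma R ^^ i) z \<le> (sigma R ^^ j) z"
proof -
  have "(sigma R ^^ j) z = (sigma R ^^ (j - i)) ((sigma R ^^ i) z)"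
    using assms(3) by (metis funpow_add le_add_diff_inverse2 o_apply)
  then show ?thesis using pow_in[OF assms(1) pow_in[OF assms(1,2), THEN conjunct1]] by simp
qed

lemma op_cons:
  "op_apply R (a # L) z = a * int z + op_apply R L (sigma R z)"
  unfolding op_apply_def length_Cons sum.lessThan_Suc_shift
  by (simp add: funpow_Suc_right del: funpow.simps)

lemma op_shift:
  "op_apply R (replicate D 0 @ A) z = op_apply R A ((sigma R ^^ D) z)"
proof (induction D arbitrary: z)
  case 0 then show ?case by simp
next
  case (Suc D)
  then show ?case by (simp add: op_cons funpow_Suc_right del: funpow.simps)
qed

lemma op_neg_list: "op_apply R (map uminus A) z = - op_apply R A z"
  unfolding op_apply_def by (simp add: sum_negf[symmetric])

lemma bound_B:
  assumes "infinite R" "z \<in> R"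
  shows "op_apply R B z \<le> (\<Sum>i<length B. \<bar>B ! i\<bar>) * int ((sigma R ^^ length B) z)"
  unfolding op_apply_def sum_distrib_right
proof (rule sum_mono)
  fix i assume "i \<in> {..<length B}"
  then have "(sigma R ^^ i) z \<le> (sigma R ^^ length B) z"
    using pow_mono[OF assms] by simp
  then have "int ((sigma R ^^ i) z) \<le> int ((sigma R ^^ length B) z)" by simp
  moreover have "B ! i * int ((sigma R ^^ i) z) \<le> \<bar>B ! i\<bar> * int ((sigma R ^^ i) z)"
    by (simp add: mult_right_mono)
  ultimately show "B ! i * int ((sigma R ^^ i) z) \<le> \<bar>B ! i\<bar> * int ((sigma R ^^ length B) z)"
    by (meson abs_ge_zero mult_left_mono order_trans)
qed

lemma grow:
  assumes inf: "infinite R" and sp: "sparse R" and pos: "op_pos R A"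
  shows "\<exists>D. \<forall>w\<in>R. op_apply R A ((sigma R ^^ D) w) > int k * int w"
proof (induction k)
  case 0
  from sp pos obtain D where "\<forall>z\<in>R. op_apply R A ((sigma R ^^ D) z) > int z"
    unfolding sparse_def by blast
  then have "\<forall>w\<in>R. op_apply R A ((sigma R ^^ D) w) > int 0 * int w"
    by (metis mult_zero_left of_nat_0 of_nat_0_le_iff order_le_less_trans)
  then show ?case by blast
next
  case (Suc k)
  then obtain D where D: "\<forall>w\<in>R. op_apply R A ((sigma R ^^ D) w) > int k * int w" by blast
  define L where "L = (- int k) # replicate D 0 @ A"
  have Lv: "op_apply R L w = - int k * int w + op_apply R A ((sigma R ^^ D) (sigma R w))" for w
    unfolding L_def by (simp add: op_cons op_shift)
  have "op_apply R L w > 0" if "w \<in> R" for w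
  proof -
    have s: "sigma R w \<in> R" "w < sigma R w" using sig_props[OF inf that] by auto
    have "int k * int w \<le> int k * int (sigma R w)" using s by (intro mult_left_mono) auto
    then show ?thesis using D s(1) Lv[of w] by fastforce
  qed
  then have emp: "{z\<in>R. \<not> op_apply R L z > 0} = {}" by auto
  have "op_pos R L" unfolding op_pos_def emp by (rule finite.emptyI)
  with sp obtain E where E: "\<forall>z\<in>R. op_apply R L ((sigma R ^^ E) z) > int z"
    unfolding sparse_def by blast
  have "\<forall>w\<in>R. op_apply R A ((sigma R ^^ (D + Suc E)) w) > int (Suc k) * int w"
  proof
    fix w assume w: "w \<in> R"
    have eq: "(sigma R ^^ D) (sigma R ((sigma R ^^ E) w)) = (sigma R ^^ (D + Suc E)) w"
      by (metis (no_types) funpow_add funpow.simps(2) o_apply)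
    have "w \<le> (sigma R ^^ E) w" using pow_in[OF inf w] by simp
    then have "int k * int w \<le> int k * int ((sigma R ^^ E) w)" by (intro mult_left_mono) auto
    then show "op_apply R A ((sigma R ^^ (D + Suc E)) w) > int (Suc k) * int w"
      using E w Lv[of "(sigma R ^^ E) w"] eq by (fastforce simp: algebra_simps)
  qed
  then show ?case by blast
qed

lemma main_pos:
  assumes inf: "infinite R" and sp: "sparse R" and pos: "op_pos R A"
  shows "\<exists>\<Delta>0::nat. \<forall>\<Delta>\<ge>\<Delta>0. \<forall>z\<in>R.
           op_apply R A ((sigma R ^^ \<Delta>) z) > op_apply R B z"
proof -
  define c where "c = (\<Sum>i<length B. \<bar>B ! i\<bar>)"
  have c0: "c \<ge> 0" unfolding c_def by (simp add: sum_nonneg)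
  obtain D where D: "\<forall>w\<in>R. op_apply R A ((sigma R ^^ D) w) > int (nat c) * int w"
    using grow[OF inf sp pos] by blast
  have "\<forall>\<Delta>\<ge>D + length B. \<forall>z\<in>R. op_apply R A ((sigma R ^^ \<Delta>) z) > op_apply R B z"
  proof (intro allI impI ballI)
    fix \<Delta> z assume d: "D + length B \<le> \<Delta>" and z: "z \<in> R"
    define w where "w = (sigma R ^^ (\<Delta> - D)) z"
    have wR: "w \<in> R" unfolding w_def using pow_in[OF inf z] by simp
    have eq: "(sigma R ^^ \<Delta>) z = (sigma R ^^ D) w" unfolding w_def using d
      by (metis funpow_add le_add_diff_inverse le_add1 o_apply order_trans)
    have "(sigma R ^^ length B) z \<le> w" unfolding w_def using pow_mono[OF inf z] d by simp
    then have "c * int ((sigma R ^^ length B) z) \<le> c * int w" using c0 by (simp add: mult_left_mono)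
    moreover have "op_apply R B z \<le> c * int ((sigma R ^^ length B) z)"
      using bound_B[OF inf z] unfolding c_def .
    moreover have "int (nat c) = c" using c0 by simp
    ultimately show "op_apply R A ((sigma R ^^ \<Delta>) z) > op_apply R B z"
      using D wR eq by fastforce
  qed
  then show ?thesis by blast
qed

theorem mainTheorem3:
  fixes R :: "nat set" and A B :: "int list"
  assumes "infinite R" and "sparse R" and "\<not> op_zero R A"
  shows "\<exists>\<Delta>0::nat. \<forall>\<Delta>\<ge>\<Delta>0. \<forall>z\<in>R.
           \<bar>op_apply R A ((sigma R ^^ \<Delta>) z)\<bar> > op_apply R B z"
proof -
  have "op_pos R A \<or> op_neg R A" using assms(2,3) unfolding sparse_def by blast
  then show ?thesis
  proof
    assume "op_pos R A"
    from main_pos[OF assms(1,2) this, of B] obtain D where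
      "\<forall>\<Delta>\<ge>D. \<forall>z\<in>R. op_apply R A ((sigma R ^^ \<Delta>) z) > op_apply R B z" by blast
    then show ?thesis by (meson abs_ge_self less_le_trans)
  next
    assume "op_neg R A"
    then have "op_pos R (map uminus A)" unfolding op_pos_def op_neg_def op_neg_list by simp
    from main_pos[OF assms(1,2) this, of B] obtain D where
      "\<forall>\<Delta>\<ge>D. \<forall>z\<in>R. op_apply R (map uminus A) ((sigma R ^^ \<Delta>) z) > op_apply R B z" by blast
    then show ?thesis unfolding op_neg_list by (meson abs_ge_minus_self less_le_trans)
  qed
qed

end
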